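(* Let $A$ (held by Alice) and $B$ (held by Bob) be strings over an alphabet $\Sigma$ known to both parties, and let $\epsilon>0$ be any constant. The \textsc{Lcp} problem, computing $\ell=\mathrm{LCP}(A,B)$, has a public-coin randomized protocol with either (1) $O(1)$ rounds and $O(|A|^\epsilon)$ communication, or (2) $O(\lg\lg\ell)$ rounds and $O(\ell^\epsilon)$ communication.
   Context: $\mathrm{LCP}(A,B)$ is the largest $\ell\ge0$ with $A[1..\ell]=B[1..\ell]$. In the public-coin randomized model the parties share an infinite string of independent unbiased random bits, and the output must be correct with probability at least a fixed constant greater than $1/2$. A round is one message; communication is the total number of bits sent. *)

theory Defs
  imports "HOL-Probability.Probability" "HOL-Library.Countable"
begin

definition lcp :: "'a list \<Rightarrow> 'a list \<Rightarrow> nat" where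
  "lcp A B = (GREATEST l. l \<le> length A \<and> l \<le> length B \<and> take l A = take l B)"

definition coins :: "(nat \<Rightarrow> bool) measure" where
  "coins = PiM UNIV (\<lambda>_. measure_pmf (bernoulli_pmf (1/2)))"

text \<open>The transcript is the list of messages sent so far.
  Alice speaks when the transcript has even length, Bob when it has odd length;
  each message depends on the speaker's own input, the transcript and the public coins.\<close>

record 'a protocol =
  pmsg  :: "bool list list \<Rightarrow> (nat \<Rightarrow> bool) \<Rightarrow> 'a list \<Rightarrow> bool list"
  phalt :: "bool list list \<Rightarrow> (nat \<Rightarrow> bool) \<Rightarrow> bool"
  pout  :: "bool list list \<Rightarrow> (nat \<Rightarrow> bool) \<Rightarrow> nat"

fun ptrans :: "'a protocol \<Rightarrow> (nat \<Rightarrow> bool) \<Rightarrow> 'a list \<Rightarrow> 'a list \<Rightarrow> nat \<Rightarrow> bool list list" where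
  "ptrans P r A B 0 = []"
| "ptrans P r A B (Suc i) =
     (let t = ptrans P r A B i in t @ [pmsg P t r (if even i then A else B)])"

definition phalts_within :: "'a protocol \<Rightarrow> (nat \<Rightarrow> bool) \<Rightarrow> 'a list \<Rightarrow> 'a list \<Rightarrow> real \<Rightarrow> bool" where
  "phalts_within P r A B R = (\<exists>i. real i \<le> R \<and> phalt P (ptrans P r A B i) r)"

definition prounds :: "'a protocol \<Rightarrow> (nat \<Rightarrow> bool) \<Rightarrow> 'a list \<Rightarrow> 'a list \<Rightarrow> nat" where
  "prounds P r A B = (LEAST i. phalt P (ptrans P r A B i) r)"

definition ptranscript :: "'a protocol \<Rightarrow> (nat \<Rightarrow> bool) \<Rightarrow> 'a list \<Rightarrow> 'a list \<Rightarrow> bool list list" where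
  "ptranscript P r A B = ptrans P r A B (prounds P r A B)"

definition pbits :: "'a protocol \<Rightarrow> (nat \<Rightarrow> bool) \<Rightarrow> 'a list \<Rightarrow> 'a list \<Rightarrow> nat" where
  "pbits P r A B = sum_list (map length (ptranscript P r A B))"

definition poutput :: "'a protocol \<Rightarrow> (nat \<Rightarrow> bool) \<Rightarrow> 'a list \<Rightarrow> 'a list \<Rightarrow> nat" where
  "poutput P r A B = pout P (ptranscript P r A B) r"

end

theory Submission
  imports Defs
begin

definition H :: "(nat \<Rightarrow> bool) \<Rightarrow> nat \<Rightarrow> 'a::countable list \<Rightarrow> bool list" where
  "H r b w = map (\<lambda>m. r (to_nat (w, m))) [0..<b]"

definition fin_dep :: "((nat \<Rightarrow> bool) \<Rightarrow> 'b) \<Rightarrow> bool" where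
  "fin_dep f \<longleftrightarrow> (\<exists>S. finite S \<and> (\<forall>r r'. (\<forall>i\<in>S. r i = r' i) \<longrightarrow> f r = f r'))"

lemma space_coins: "space coins = UNIV"
  by (simp add: coins_def space_PiM)

lemma comp_meas: "(\<lambda>r. r i) \<in> measurable coins (count_space UNIV)"
proof -
  have "(\<lambda>r. r i) \<in> measurable coins (measure_pmf (bernoulli_pmf (1/2)))"
    unfolding coins_def by (rule measurable_component_singleton) simp
  then show ?thesis by (simp add: measurable_cong_sets[OF refl sets_measure_pmf_count_space])
qed

lemma cyl_sets: "finite S \<Longrightarrow> {r. \<forall>i\<in>S. r i = g i} \<in> sets coins"
proof -
  assume S: "finite S"
  have "Measurable.pred coins (\<lambda>r. \<forall>i\<in>S. r i = g i)"
    by (rule pred_intros_finite(3)[OF S], rule pred_count_space_const1, rule comp_meas)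
  then show ?thesis unfolding pred_def space_coins by simp
qed

lemma fin_dep_meas:
  assumes "fin_dep f" shows "f \<in> measurable coins (count_space UNIV)"
proof -
  obtain S where S: "finite S" "\<And>r r'. (\<forall>i\<in>S. r i = r' i) \<Longrightarrow> f r = f r'"
    using assms unfolding fin_dep_def by blast
  show ?thesis unfolding measurable_def
  proof (safe)
    fix A
    let ?F = "(\<lambda>r. restrict r S) ` (f -` A)"
    have "?F \<subseteq> PiE S (\<lambda>_. UNIV)" by auto
    then have fin: "finite ?F" by (rule finite_subset) (auto intro: finite_PiE S(1))
    have eq: "f -` A \<inter> space coins = (\<Union>g\<in>?F. {r. \<forall>i\<in>S. r i = g i})"
    proof (rule set_eqI, rule iffI)
      fix r assume "r \<in> f -` A \<inter> space coins"
      then show "r \<in> (\<Union>g\<in>?F. {r. \<forall>i\<in>S. r i = g i})" by auto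
    next
      fix r assume "r \<in> (\<Union>g\<in>?F. {r. \<forall>i\<in>S. r i = g i})"
      then obtain r0 where "r0 \<in> f -` A" "\<forall>i\<in>S. r i = r0 i" by auto
      then have "f r = f r0" using S(2) by metis
      with \<open>r0 \<in> f -` A\<close> show "r \<in> f -` A \<inter> space coins" by (simp add: space_coins)
    qed
    show "f -` A \<inter> space coins \<in> sets coins"
      unfolding eq using fin cyl_sets[OF S(1)] by blast
  qed (simp)
qed

lemma fin_dep_comp: "fin_dep f \<Longrightarrow> fin_dep (\<lambda>r. g (f r))"
  unfolding fin_dep_def by metis

lemma fin_dep_const: "fin_dep (\<lambda>r. c)"
  unfolding fin_dep_def by blast

lemma ptrans_meas:
  assumes "\<And>t X. fin_dep (\<lambda>r. pmsg P t r X)"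
  shows "(\<lambda>r. ptrans P r A B i) \<in> measurable coins (count_space UNIV)"
proof (induction i)
  case 0 then show ?case by simp
next
  case (Suc i)
  have "(\<lambda>r. (\<lambda>t r. t @ [pmsg P t r (if even i then A else B)]) (ptrans P r A B i) r) \<in> measurable coins (count_space UNIV)"
  proof (rule measurable_compose_countable[OF _ Suc])
    fix t
    have "fin_dep (\<lambda>r. t @ [pmsg P t r (if even i then A else B)])"
      using fin_dep_comp[OF assms[of t "if even i then A else B"], where g="\<lambda>m. t @ [m]"] by simp
    then show "(\<lambda>r. t @ [pmsg P t r (if even i then A else B)]) \<in> measurable coins (count_space UNIV)"
      by (rule fin_dep_meas)
  qed
  then show ?case by (simp add: Let_def)
qed

lemma prot_meas:
  assumes m: "\<And>t X. fin_dep (\<lambda>r. pmsg P t r X)" and h: "\<And>t. fin_dep (\<lambda>r. phalt P t r)"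
    and o: "\<And>t. fin_dep (\<lambda>r. pout P t r)"
  shows "(\<lambda>r. prounds P r A B) \<in> measurable coins (count_space UNIV)"
    "(\<lambda>r. ptranscript P r A B) \<in> measurable coins (count_space UNIV)"
    "(\<lambda>r. pbits P r A B) \<in> measurable coins (count_space UNIV)"
    "(\<lambda>r. poutput P r A B) \<in> measurable coins (count_space UNIV)"
    "Measurable.pred coins (\<lambda>r. phalts_within P r A B R)"
proof -
  have hb: "(\<lambda>r. phalt P (ptrans P r A B i) r) \<in> measurable coins (count_space UNIV)" for i
    by (rule measurable_compose_countable[OF _ ptrans_meas[OF m]], rule fin_dep_meas, rule h)
  show pr: "(\<lambda>r. prounds P r A B) \<in> measurable coins (count_space UNIV)"
    unfolding prounds_def by (rule measurable_Least[OF hb])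
  show pt: "(\<lambda>r. ptranscript P r A B) \<in> measurable coins (count_space UNIV)"
    unfolding ptranscript_def
    by (rule measurable_compose_countable[OF ptrans_meas[OF m] pr])
  show "(\<lambda>r. pbits P r A B) \<in> measurable coins (count_space UNIV)"
    unfolding pbits_def
    by (rule measurable_compose[OF pt]) simp
  show "(\<lambda>r. poutput P r A B) \<in> measurable coins (count_space UNIV)"
    unfolding poutput_def
    by (rule measurable_compose_countable[OF _ pt], rule fin_dep_meas, rule o)
  show "Measurable.pred coins (\<lambda>r. phalts_within P r A B R)"
    unfolding phalts_within_def
    by (rule pred_intros_countable(2), rule pred_intros_conj1', rule hb)
qed

lemma coins_prob: "prob_space coins"
  unfolding coins_def by (intro prob_space_PiM measure_pmf.prob_space_axioms)

interpretation C: prob_space coins by (rule coins_prob)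

lemma coll_prob:
  fixes w w' :: "'a::countable list"
  assumes "w \<noteq> w'"
  shows "measure coins {r. H r b w = H r b w'} \<le> (1/2)^b"
proof -
  interpret P: product_prob_space "\<lambda>_::nat. measure_pmf (bernoulli_pmf (1/2))" UNIV
    by (rule product_prob_spaceI) (rule measure_pmf.prob_space_axioms)
  define e where "e = (\<lambda>(c::bool, m::nat). to_nat (if c then w' else w, m))"
  have inj: "inj e" unfolding e_def inj_def using assms by (auto split: if_splits)
  define J where "J = e ` (UNIV \<times> {..<b})"
  have cardJ: "card J = 2*b" unfolding J_def
    by (subst card_image) (auto intro: inj_on_subset[OF inj] simp: card_cartesian_product)
  have finJ: "finite J" unfolding J_def by simp
  define V where "V = ({..<b} \<rightarrow>\<^sub>E (UNIV::bool set))"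
  have finV: "finite V" unfolding V_def by (simp add: finite_PiE)
  have cardV: "card V = 2^b" unfolding V_def by (simp add: card_PiE)
  define F where "F v = {r. \<forall>i\<in>J. r i = v (snd (inv e i))}" for v :: "nat \<Rightarrow> bool"
  have Fs: "F v \<in> sets coins" for v unfolding F_def by (rule cyl_sets[OF finJ])
  have sub: "{r. H r b w = H r b w'} \<subseteq> (\<Union>v\<in>V. F v)"
  proof
    fix r assume "r \<in> {r. H r b w = H r b w'}"
    then have eq: "\<And>m. m < b \<Longrightarrow> r (to_nat (w, m)) = r (to_nat (w', m))"
      unfolding H_def by (auto simp: list_eq_iff_nth_eq)
    let ?v = "restrict (\<lambda>m. r (to_nat (w, m))) {..<b}"
    have "?v \<in> V" unfolding V_def by simp
    moreover have "r \<in> F ?v" unfolding F_def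
    proof (intro CollectI ballI)
      fix i assume "i \<in> J"
      then obtain c m where i: "i = e (c, m)" "m < b" unfolding J_def by auto
      have iv: "snd (inv e i) = m" using i(1) inv_f_f[OF inj] by simp
      have ri: "r i = r (to_nat (w, m))" using i(1) eq[OF i(2)] by (cases c) (simp_all add: e_def)
      show "r i = ?v (snd (inv e i))" by (simp add: iv ri i(2))
    qed
    ultimately show "r \<in> (\<Union>v\<in>V. F v)" by blast
  qed
  have mF: "measure coins (F v) = (1/2)^(2*b)" for v
  proof -
    have Fe: "F v = {x \<in> space coins. \<forall>i\<in>J. x i \<in> {v (snd (inv e i))}}"
      unfolding F_def space_coins by auto
    have "emeasure coins (F v) = (\<Prod>i\<in>J. emeasure (measure_pmf (bernoulli_pmf (1/2))) {v (snd (inv e i))})"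
      unfolding Fe coins_def by (rule P.emeasure_PiM_Collect) (use finJ in auto)
    also have "\<dots> = (\<Prod>i\<in>J. ennreal (1/2))"
      by (intro prod.cong refl) (simp add: emeasure_pmf_single pmf_bernoulli_True pmf_bernoulli_False split: bool.splits)
    also have "\<dots> = ennreal ((1/2)^(2*b))" by (simp only: prod_constant cardJ ennreal_power)
    finally show ?thesis by (simp add: C.emeasure_eq_measure)
  qed
  have "measure coins {r. H r b w = H r b w'} \<le> measure coins (\<Union>v\<in>V. F v)"
    using sub finV Fs by (intro C.finite_measure_mono) auto
  also have "\<dots> \<le> (\<Sum>v\<in>V. measure coins (F v))"
    using finV Fs by (intro C.finite_measure_subadditive_finite) auto
  also have "\<dots> = 2^b * (1/2)^(2*b)" using mF cardV by simp
  also have "\<dots> = (1/2)^b" by (simp only: mult_2 power_add mult.assoc[symmetric] power_mult_distrib[symmetric]) simp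
  finally show ?thesis .
qed

lemma lcp_props:
  "lcp A B \<le> length A" "lcp A B \<le> length B" "take (lcp A B) A = take (lcp A B) B"
proof -
  let ?P = "\<lambda>l. l \<le> length A \<and> l \<le> length B \<and> take l A = take l B"
  have "?P (lcp A B)" unfolding lcp_def
    by (rule GreatestI_nat[of ?P 0 "length A"]) auto
  then show "lcp A B \<le> length A" "lcp A B \<le> length B" "take (lcp A B) A = take (lcp A B) B" by auto
qed

lemma lcp_iff: "(p \<le> length A \<and> p \<le> length B \<and> take p A = take p B) \<longleftrightarrow> p \<le> lcp A B"
proof
  assume h: "p \<le> length A \<and> p \<le> length B \<and> take p A = take p B"
  show "p \<le> lcp A B" unfolding lcp_def
    by (rule Greatest_le_nat[of _ p "length A"]) (use h in auto)
next
  assume h: "p \<le> lcp A B"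
  have "take p A = take p (take (lcp A B) A)" using h by (simp add: min_def)
  also have "\<dots> = take p (take (lcp A B) B)" by (metis lcp_props(3))
  also have "\<dots> = take p B" using h by (simp add: min_def)
  finally show "p \<le> length A \<and> p \<le> length B \<and> take p A = take p B"
    using h lcp_props(1,2)[of A B] by simp
qed

definition tb :: "(nat \<Rightarrow> nat \<Rightarrow> bool list) \<Rightarrow> nat \<Rightarrow> nat \<Rightarrow> nat \<Rightarrow> bool list" where
  "tb h n b p = (p \<le> n) # h b p"

definition chk :: "(nat \<Rightarrow> nat \<Rightarrow> bool list) \<Rightarrow> nat \<Rightarrow> nat \<Rightarrow> nat \<Rightarrow> bool list \<Rightarrow> bool" where
  "chk h n b p c = (hd c \<and> c = tb h n b p)"

definition dd :: "nat \<Rightarrow> nat \<Rightarrow> nat \<Rightarrow> nat" where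
  "dd q R u = 2^(q*(R-u))"

definition amsg :: "(nat \<Rightarrow> nat \<Rightarrow> bool list) \<Rightarrow> nat \<Rightarrow> nat \<Rightarrow> nat \<Rightarrow> nat \<Rightarrow> nat \<Rightarrow> nat \<Rightarrow> bool list" where
  "amsg h n q R b lo u = concat (map (\<lambda>i. tb h n b (lo + i * dd q R (Suc u))) [1..<2^q])"

definition chunk :: "nat \<Rightarrow> nat \<Rightarrow> bool list \<Rightarrow> bool list" where
  "chunk b i m = take (Suc b) (drop ((i-1) * Suc b) m)"

definition bmsg :: "(nat \<Rightarrow> nat \<Rightarrow> bool list) \<Rightarrow> nat \<Rightarrow> nat \<Rightarrow> nat \<Rightarrow> nat \<Rightarrow> nat \<Rightarrow> nat \<Rightarrow> bool list \<Rightarrow> bool list" where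
  "bmsg h n q R b lo u m = replicate (length (takeWhile id
      (map (\<lambda>i. chk h n b (lo + i * dd q R (Suc u)) (chunk b i m)) [1..<2^q]))) True"

definition loof :: "nat \<Rightarrow> nat \<Rightarrow> nat list \<Rightarrow> nat" where
  "loof q R js = (\<Sum>v<length js. js!v * dd q R (Suc v))"

definition srch :: "(nat \<Rightarrow> nat \<Rightarrow> bool list) \<Rightarrow> nat \<Rightarrow> nat \<Rightarrow> nat \<Rightarrow> nat \<Rightarrow> nat \<Rightarrow> bool list list \<Rightarrow> bool list" where
  "srch h n q R b off t = (let u = (length t - off) div 2;
      lo = loof q R (map (\<lambda>v. length (t!(off+2* v+1))) [0..<u]) in
      if even (length t - off) then amsg h n q R b lo u else bmsg h n q R b lo u (last t))"

definition slo :: "nat \<Rightarrow> nat \<Rightarrow> nat \<Rightarrow> nat \<Rightarrow> nat" where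
  "slo q R l u = l - l mod dd q R u"
definition sjj :: "nat \<Rightarrow> nat \<Rightarrow> nat \<Rightarrow> nat \<Rightarrow> nat" where
  "sjj q R l u = (l mod dd q R u) div dd q R (Suc u)"

definition STf :: "(nat \<Rightarrow> nat \<Rightarrow> bool list) \<Rightarrow> nat \<Rightarrow> nat \<Rightarrow> nat \<Rightarrow> nat \<Rightarrow> nat \<Rightarrow> nat \<Rightarrow> nat \<Rightarrow> bool list" where
  "STf h n q R b l off m = (let u = (m - off) div 2 in
     if even (m - off) then amsg h n q R b (slo q R l u) u else replicate (sjj q R l u) True)"

lemma dd_pos: "0 < dd q R u" by (simp add: dd_def)

lemma dd_Suc: "u < R \<Longrightarrow> dd q R u = 2^q * dd q R (Suc u)"
proof -
  assume "u < R"
  then have "q*(R-u) = q + q*(R - Suc u)"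
    by (metis Suc_diff_Suc mult_Suc_right)
  then show ?thesis by (simp add: dd_def power_add)
qed

lemma dd_dvd: "u \<le> R \<Longrightarrow> dd q R u dvd dd q R 0"
  unfolding dd_def by (intro le_imp_power_dvd) simp

lemma dd_R: "dd q R R = 1" by (simp add: dd_def)

lemma lo_sum:
  assumes "l < dd q R 0" "u \<le> R"
  shows "(\<Sum>v<u. sjj q R l v * dd q R (Suc v)) = slo q R l u"
  using assms(2)
proof (induction u)
  case 0
  then show ?case using assms(1) by (simp add: slo_def)
next
  case (Suc u)
  let ?D = "dd q R u" and ?d = "dd q R (Suc u)"
  have D: "?D = 2^q * ?d" using Suc.prems by (intro dd_Suc) simp
  have m1: "l mod ?d = (l mod ?D) mod ?d" using D by (simp add: mod_mod_cancel)
  have m2: "l mod ?D = (l mod ?D) div ?d * ?d + (l mod ?D) mod ?d" by simp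
  have m3: "l mod ?D \<le> l" by simp
  have "(\<Sum>v<Suc u. sjj q R l v * dd q R (Suc v)) = slo q R l u + sjj q R l u * ?d"
    using Suc by simp
  also have "\<dots> = slo q R l (Suc u)"
    unfolding slo_def sjj_def using m1 m2 m3 by linarith
  finally show ?case .
qed

lemma tw_len:
  assumes "a < k"
  shows "length (takeWhile id (map (\<lambda>i. i \<le> a) [1..<k])) = a"
proof -
  define f where "f = (\<lambda>i::nat. i \<le> a)"
  define xs where "xs = map f [1..<Suc a]"
  define ys where "ys = map f [Suc a..<k]"
  have "[1..<k] = [1..<Suc a] @ [Suc a..<k]" using upt_add_eq_append[of 1 "Suc a" "k - Suc a"] assms by simp
  then have e: "map f [1..<k] = xs @ ys" unfolding xs_def ys_def by simp
  have "\<forall>x\<in>set xs. id x" unfolding xs_def f_def by auto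
  then have t: "takeWhile id (xs @ ys) = xs @ takeWhile id ys" using takeWhile_append[of id xs ys] by auto
  have ty: "takeWhile id ys = []"
  proof (cases "Suc a < k")
    case True
    then have "[Suc a..<k] = Suc a # [Suc (Suc a)..<k]" by (simp add: upt_conv_Cons)
    then show ?thesis unfolding ys_def f_def by simp
  next
    case False
    then have "[Suc a..<k] = []" by simp
    then show ?thesis unfolding ys_def by (simp only: list.map takeWhile.simps)
  qed
  have "length xs = a" unfolding xs_def by simp
  then show ?thesis using e t ty unfolding f_def[symmetric] by simp
qed

lemma chunk_concat:
  assumes "\<forall>x\<in>set xs. length x = Suc b" "i < length xs"
  shows "take (Suc b) (drop (i * Suc b) (concat xs)) = xs ! i"
  using assms
proof (induction xs arbitrary: i)
  case Nil then show ?case by simp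
next
  case (Cons x xs)
  show ?case
  proof (cases i)
    case 0 then show ?thesis using Cons.prems by simp
  next
    case (Suc i')
    then have "drop (i * Suc b) (concat (x # xs)) = drop (i' * Suc b) (concat xs)"
      using Cons.prems by simp
    then show ?thesis using Cons Suc by simp
  qed
qed

lemma len_tb: "(\<And>b p. length (h b p) = b) \<Longrightarrow> length (tb h n b p) = Suc b"
  by (simp add: tb_def)

lemma chunk_amsg:
  assumes len: "\<And>b p. length (h b p) = b" and i: "1 \<le> i" "i < 2^q"
  shows "chunk b i (amsg h n q R b lo u) = tb h n b (lo + i * dd q R (Suc u))"
proof -
  let ?xs = "map (\<lambda>i. tb h n b (lo + i * dd q R (Suc u))) [1..<2^q]"
  have "chunk b i (amsg h n q R b lo u) = ?xs ! (i - 1)"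
    unfolding chunk_def amsg_def
    by (rule chunk_concat) (use i len_tb[OF len] in auto)
  also have "\<dots> = tb h n b (lo + i * dd q R (Suc u))"
  proof -
    have "[1..<2^q] ! (i - 1) = i" using i by (subst nth_upt) auto
    then show ?thesis using i by simp
  qed
  finally show ?thesis .
qed

lemma srch_step:
  assumes lenA: "\<And>b p. length (hA b p) = b"
    and good: "\<forall>p < dd q R 0. chk hB nB b p (tb hA nA b p) = (p \<le> l)"
    and l: "l < dd q R 0" and u: "u < R"
  shows "bmsg hB nB q R b (slo q R l u) u (amsg hA nA q R b (slo q R l u) u) = replicate (sjj q R l u) True"
proof -
  let ?D = "dd q R u" and ?d = "dd q R (Suc u)" and ?lo = "slo q R l u"
  have D: "?D = 2^q * ?d" using u by (intro dd_Suc)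
  have dpos: "0 < ?d" by (rule dd_pos)
  have jj: "sjj q R l u < 2^q"
    unfolding sjj_def using D dpos
    by (metis div_less_iff_less_mult mod_less_divisor dd_pos mult.commute)
  have lo_eq: "?lo = ?D * (l div ?D)" unfolding slo_def by (simp add: minus_mod_eq_mult_div)
  obtain m where m: "dd q R 0 = ?D * m" using dd_dvd[of u R q] u by (auto elim: dvdE)
  have "l div ?D < m" using l m dd_pos[of q R u]
    by (metis div_less_iff_less_mult mult.commute)
  then have loD: "?lo + ?D \<le> dd q R 0" using lo_eq m
    by (metis add.commute mult.commute mult_Suc mult_le_mono1 Suc_leI)
  have pt: "?lo + i * ?d < dd q R 0" if "i < 2^q" for i
  proof -
    have "i * ?d < ?D" using that D dpos by simp
    then show ?thesis using loD by linarith
  qed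
  have tv: "(?lo + i * ?d \<le> l) = (i \<le> sjj q R l u)" for i
  proof -
    have le: "l mod ?D \<le> l" by simp
    have "(?lo + i * ?d \<le> l) = (i * ?d \<le> l mod ?D)" unfolding slo_def using le by linarith
    also have "\<dots> = (i \<le> sjj q R l u)" unfolding sjj_def using dpos by (simp add: less_eq_div_iff_mult_less_eq)
    finally show ?thesis .
  qed
  have meq: "map (\<lambda>i. chk hB nB b (?lo + i * ?d) (chunk b i (amsg hA nA q R b ?lo u))) [1..<2^q]
      = map (\<lambda>i. i \<le> sjj q R l u) [1..<2^q]"
  proof (rule map_cong[OF refl])
    fix i assume "i \<in> set [1..<2^q]"
    then have i: "1 \<le> i" "i < 2^q" by auto
    show "chk hB nB b (?lo + i * ?d) (chunk b i (amsg hA nA q R b ?lo u)) = (i \<le> sjj q R l u)"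
      using chunk_amsg[OF lenA i] good pt[OF i(2)] tv by simp
  qed
  show ?thesis by (simp only: bmsg_def meq tw_len[OF jj])
qed

lemma loof_map: "loof q R (map f [0..<u]) = (\<Sum>v<u. f v * dd q R (Suc v))"
  unfolding loof_def by (intro sum.cong) auto

lemma srch_ideal:
  assumes lenA: "\<And>b p. length (hA b p) = b"
    and good: "\<forall>p < dd q R 0. chk hB nB b p (tb hA nA b p) = (p \<le> l)"
    and l: "l < dd q R 0"
    and n: "length t = n" "off \<le> n" "(n - off) div 2 < R" "even off"
    and T: "\<And>m. off \<le> m \<Longrightarrow> m < n \<Longrightarrow> t ! m = STf hA nA q R b l off m"
  shows "srch (if even n then hA else hB) (if even n then nA else nB) q R b off t = STf hA nA q R b l off n"
proof -
  let ?u = "(n - off) div 2"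
  have "map (\<lambda>v. length (t!(off+2* v+1))) [0..<?u] = map (\<lambda>v. sjj q R l v) [0..<?u]"
  proof (rule map_cong[OF refl])
    fix v assume "v \<in> set [0..<?u]"
    then have v: "v < ?u" by simp
    then have "off + 2* v+1 < n" by linarith
    then have "t!(off+2* v+1) = STf hA nA q R b l off (off+2* v+1)" using T by simp
    also have "\<dots> = replicate (sjj q R l v) True" unfolding STf_def by simp
    finally show "length (t!(off+2* v+1)) = sjj q R l v" by simp
  qed
  then have lo: "loof q R (map (\<lambda>v. length (t!(off+2* v+1))) [0..<?u]) = slo q R l ?u"
    using lo_sum[OF l, of ?u] n(3) by (simp add: loof_map)
  show ?thesis
  proof (cases "even n")
    case True
    then have "even (n - off)" using n(4) by simp
    then show ?thesis unfolding srch_def STf_def Let_def using lo True n(1) by simp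
  next
    case False
    then have odd: "odd (n - off)" using n(4) n(2) by simp
    then have "n > off" using n(2) by (cases "n = off") auto
    then have lt: "last t = t ! (n - 1)" using n(1) by (subst last_conv_nth) auto
    have "t ! (n - 1) = STf hA nA q R b l off (n - 1)" using T \<open>n > off\<close> by simp
    also have "\<dots> = amsg hA nA q R b (slo q R l ?u) ?u"
    proof -
      have e: "even (n - 1 - off)" using odd \<open>n > off\<close> by (simp add: odd_pos)
      have "(n - 1 - off) div 2 = ?u" using odd \<open>n > off\<close>
        by (metis Suc_diff_Suc diff_Suc_1 e even_Suc_div_two not0_implies_Suc diff_commute zero_less_diff)
      then show ?thesis using e unfolding STf_def Let_def by simp
    qed
    finally have "last t = amsg hA nA q R b (slo q R l ?u) ?u" using lt by simp
    then show ?thesis unfolding srch_def STf_def Let_def using lo False odd n(1)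
      srch_step[OF lenA good l n(3)] by simp
  qed
qed

section \<open>General protocol facts\<close>

lemma ptrans_len: "length (ptrans P r A B i) = i"
  by (induction i) (simp_all add: Let_def)

lemma ptrans_prefix: "i \<le> j \<Longrightarrow> take i (ptrans P r A B j) = ptrans P r A B i"
proof (induction j)
  case 0 then show ?case by simp
next
  case (Suc j)
  show ?case
  proof (cases "i = Suc j")
    case True then show ?thesis using ptrans_len[of P r A B "Suc j"] by simp
  next
    case False
    then have "i \<le> j" using Suc.prems by simp
    then show ?thesis using Suc.IH ptrans_len[of P r A B j] by (simp add: Let_def)
  qed
qed

lemma ptrans_nth: "n < i \<Longrightarrow> ptrans P r A B i ! n = pmsg P (ptrans P r A B n) r (if even n then A else B)"
proof -
  assume "n < i"
  then have "ptrans P r A B i ! n = take (Suc n) (ptrans P r A B i) ! n" by simp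
  also have "\<dots> = ptrans P r A B (Suc n) ! n" using \<open>n < i\<close> by (simp add: ptrans_prefix)
  also have "\<dots> = pmsg P (ptrans P r A B n) r (if even n then A else B)"
    using ptrans_len[of P r A B n] by (simp add: Let_def nth_append)
  finally show ?thesis .
qed

lemma ptrans_ideal:
  assumes "\<And>n. n < N \<Longrightarrow> pmsg P (map T [0..<n]) r (if even n then A else B) = T n"
  shows "n \<le> N \<Longrightarrow> ptrans P r A B n = map T [0..<n]"
proof (induction n)
  case 0 then show ?case by simp
next
  case (Suc n)
  then show ?case using assms[of n] by (simp add: Let_def)
qed

lemma sum_list_le: "(\<forall>x\<in>set xs. f x \<le> M) \<Longrightarrow> sum_list (map f xs) \<le> length xs * (M::nat)"
  by (induction xs) auto

section \<open>Hash oracle\<close>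

definition hx :: "(nat \<Rightarrow> bool) \<Rightarrow> 'a::countable list \<Rightarrow> nat \<Rightarrow> nat \<Rightarrow> bool list" where
  "hx r X b p = H r b (take p X)"

lemma len_hx: "length (hx r X b p) = b"
  by (simp add: hx_def H_def)

definition Sb :: "'a::countable list \<Rightarrow> nat \<Rightarrow> nat set" where
  "Sb X b = (\<lambda>(p, m). to_nat (take p X, m)) ` ({..length X} \<times> {..<b})"

lemma fin_Sb: "finite (Sb X b)" by (simp add: Sb_def)

lemma hx_agree:
  assumes "\<forall>i\<in>Sb X b. r i = r' i"
  shows "hx r X b = hx r' X b"
proof
  fix p
  have "take p X = take (min p (length X)) X" by (simp add: min_def)
  then have "\<forall>m<b. to_nat (take p X, m) \<in> Sb X b" unfolding Sb_def
    by (metis (no_types, lifting) atMost_iff case_prod_conv image_eqI lessThan_iff mem_Sigma_iff min.cobounded2)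
  then show "hx r X b p = hx r' X b p" using assms unfolding hx_def H_def by auto
qed

lemma fin_dep_hx:
  assumes "\<And>h h'. h ba = h' ba \<Longrightarrow> h bb = h' bb \<Longrightarrow> F h = F h'"
  shows "fin_dep (\<lambda>r. F (hx r X))"
  unfolding fin_dep_def
proof (intro exI conjI allI impI)
  show "finite (Sb X ba \<union> Sb X bb)" by (simp add: fin_Sb)
  fix r r' :: "nat \<Rightarrow> bool" assume "\<forall>i\<in>Sb X ba \<union> Sb X bb. r i = r' i"
  then show "F (hx r X) = F (hx r' X)" using hx_agree assms by (metis UnI1 UnI2)
qed

lemma srch_cong:
  assumes "h b = h' b" shows "srch h n q R b off t = srch h' n q R b off t"
proof -
  have e: "\<And>p. h b p = h' b p" using assms by simp
  show ?thesis unfolding srch_def amsg_def bmsg_def chk_def tb_def by (simp only: e)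
qed

lemma H_sets: "{r. H r b w = H r b w'} \<in> sets coins"
proof -
  have "fin_dep (\<lambda>r. H r b w = H r b w')"
    unfolding fin_dep_def
  proof (intro exI conjI allI impI)
    show "finite ((\<lambda>m. to_nat (w, m)) ` {..<b} \<union> (\<lambda>m. to_nat (w', m)) ` {..<b})" by simp
    fix r r' :: "nat \<Rightarrow> bool"
    assume "\<forall>i\<in>(\<lambda>m. to_nat (w, m)) ` {..<b} \<union> (\<lambda>m. to_nat (w', m)) ` {..<b}. r i = r' i"
    then show "(H r b w = H r b w') = (H r' b w = H r' b w')" unfolding H_def by auto
  qed
  then have "(\<lambda>r. H r b w = H r b w') \<in> measurable coins (count_space UNIV)" by (rule fin_dep_meas)
  from measurable_sets[OF this, of "{True}"] show ?thesis by (simp add: space_coins vimage_def)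
qed

lemma chk_tb: "chk (hx r B) (length B) b p (tb (hx r A) (length A) b p)
   = (p \<le> length A \<and> p \<le> length B \<and> hx r A b p = hx r B b p)"
  unfolding chk_def tb_def by auto

lemma badU:
  fixes A B :: "'a::countable list"
  assumes "finite P"
  shows "\<exists>U\<in>sets coins. measure coins U \<le> card P * (1/2)^b \<and>
     (\<forall>r. r \<notin> U \<longrightarrow> (\<forall>p\<in>P. chk (hx r B) (length B) b p (tb (hx r A) (length A) b p) = (p \<le> lcp A B)))"
proof -
  define P' where "P' = {p\<in>P. take p A \<noteq> take p B}"
  define U where "U = (\<Union>p\<in>P'. {r. H r b (take p A) = H r b (take p B)})"
  have finP': "finite P'" using assms unfolding P'_def by simp
  have Us: "U \<in> sets coins" unfolding U_def using finP' H_sets by blast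
  have "measure coins U \<le> (\<Sum>p\<in>P'. measure coins {r. H r b (take p A) = H r b (take p B)})"
    unfolding U_def using finP' H_sets by (intro C.finite_measure_subadditive_finite) auto
  also have "\<dots> \<le> (\<Sum>p\<in>P'. (1/2)^b)"
    by (intro sum_mono coll_prob) (simp add: P'_def)
  also have "\<dots> = card P' * (1/2)^b" by simp
  also have "\<dots> \<le> card P * (1/2)^b"
    using assms by (intro mult_right_mono) (auto simp: P'_def intro: card_mono)
  finally have mU: "measure coins U \<le> card P * (1/2)^b" .
  have "chk (hx r B) (length B) b p (tb (hx r A) (length A) b p) = (p \<le> lcp A B)"
    if "r \<notin> U" "p \<in> P" for r p
  proof (cases "p \<le> lcp A B")
    case True
    then have "p \<le> length A \<and> p \<le> length B \<and> take p A = take p B" using lcp_iff by blast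
    then show ?thesis using True by (simp add: chk_tb hx_def)
  next
    case False
    then have "\<not> (p \<le> length A \<and> p \<le> length B \<and> take p A = take p B)" using lcp_iff by blast
    moreover have "take p A \<noteq> take p B \<Longrightarrow> H r b (take p A) \<noteq> H r b (take p B)"
      using that unfolding U_def P'_def by auto
    ultimately show ?thesis using False by (auto simp: chk_tb hx_def)
  qed
  then show ?thesis using Us mU by blast
qed

lemma kbound:
  fixes x k R c Y :: nat and \<epsilon> :: real
  assumes "k \<le> 2*x" "x^R \<le> Y^c" "R \<ge> 1" "3*c/R \<le> \<epsilon>" "1 \<le> Y"
  shows "real k ^ 3 \<le> 8 * real Y powr \<epsilon>"
proof -
  have xb: "real x \<le> real Y powr (c/R)"
  proof (cases "x = 0")
    case True then show ?thesis by simp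
  next
    case False
    then have "real x = (real x ^ R) powr (1/R)"
      using assms(3) by (simp add: powr_realpow[symmetric] powr_powr)
    also have "\<dots> \<le> (real Y ^ c) powr (1/R)"
      by (intro powr_mono2) (use assms(2) in \<open>auto simp flip: of_nat_power\<close>)
    also have "\<dots> = real Y powr (c/R)"
      using assms(5) by (simp add: powr_realpow[symmetric] powr_powr)
    finally show ?thesis .
  qed
  have "real k ^ 3 \<le> (2 * real x) ^ 3"
    using assms(1) by (intro power_mono) (simp_all add: of_nat_le_iff[symmetric])
  also have "\<dots> = 8 * real x ^ 3" by simp
  also have "\<dots> \<le> 8 * (real Y powr (c/R)) ^ 3"
    using xb by (intro mult_left_mono power_mono) simp_all
  also have "\<dots> = 8 * real Y powr (3*c/R)"
    using assms(5) by (simp add: powr_power)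
  also have "\<dots> \<le> 8 * real Y powr \<epsilon>"
    using assms(4,5) by (intro mult_left_mono powr_mono) simp_all
  finally show ?thesis .
qed

definition q1 :: "nat \<Rightarrow> nat \<Rightarrow> nat" where "q1 R n = (LEAST q. n < 2^(R*q))"

definition P1 :: "nat \<Rightarrow> 'a::countable protocol" where
 "P1 R = \<lparr>pmsg = (\<lambda>t r X. if t = [] then replicate (q1 R (length X)) True
                   else if length t = 1 then []
                   else srch (hx r X) (length X) (length (t!0)) R (R * length (t!0) + 3) 2 t),
          phalt = (\<lambda>t r. 2 + 2*R \<le> length t),
          pout = (\<lambda>t r. loof (length (t!0)) R (map (\<lambda>v. length (t!(2+2* v+1))) [0..<R]))\<rparr>"

lemma P1_simps:
  "pmsg (P1 R) t r X = (if t = [] then replicate (q1 R (length X)) True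
                   else if length t = 1 then []
                   else srch (hx r X) (length X) (length (t!0)) R (R * length (t!0) + 3) 2 t)"
  "phalt (P1 R) t r = (2 + 2*R \<le> length t)"
  "pout (P1 R) t r = loof (length (t!0)) R (map (\<lambda>v. length (t!(2+2 * v+1))) [0..<R])"
  by (simp_all add: P1_def)

lemma q1_ex: "R \<ge> 1 \<Longrightarrow> n < 2^(R * q1 R n)"
proof -
  assume R: "R \<ge> 1"
  have "n < 2^n" by (rule less_exp)
  also have "\<dots> \<le> 2^(R*n)" using R by (intro power_increasing) simp_all
  finally show ?thesis unfolding q1_def by (rule LeastI)
qed

lemma q1_x: "\<exists>x. 2^(q1 R n) \<le> 2*x \<and> x^R \<le> (1+n)^1"
proof (cases "q1 R n")
  case 0
  then show ?thesis by (intro exI[of _ 1]) simp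
next
  case (Suc q')
  then have "\<not> n < 2^(R*q')" unfolding q1_def by (metis lessI not_less_Least)
  then have "(2^q')^R \<le> 1 + n" by (simp add: power_mult[symmetric] mult.commute)
  then show ?thesis using Suc by (intro exI[of _ "2^q'"]) simp
qed

lemma P1_fin:
  "fin_dep (\<lambda>r. pmsg (P1 R) t r X)" "fin_dep (\<lambda>r. phalt (P1 R) t r)" "fin_dep (\<lambda>r. pout (P1 R) t r)"
proof -
  let ?b = "R * length (t!0) + 3"
  let ?F = "\<lambda>h. if t = [] then replicate (q1 R (length X)) True
                   else if length t = 1 then []
                   else srch h (length X) (length (t!0)) R ?b 2 t"
  have "fin_dep (\<lambda>r. ?F (hx r X))"
  proof (rule fin_dep_hx[where ba = ?b and bb = ?b])
    fix h h' :: "nat \<Rightarrow> nat \<Rightarrow> bool list" assume "h ?b = h' ?b"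
    then show "?F h = ?F h'" using srch_cong[of h ?b h' "length X" "length (t!0)" R 2 t] by simp
  qed
  then show "fin_dep (\<lambda>r. pmsg (P1 R) t r X)" by (simp add: P1_def)
  show "fin_dep (\<lambda>r. phalt (P1 R) t r)" "fin_dep (\<lambda>r. pout (P1 R) t r)"
    by (simp_all add: P1_def fin_dep_const)
qed

lemma P1_rounds: "prounds (P1 R) r A B = 2 + 2*R"
proof -
  have h: "\<And>i. phalt (P1 R) (ptrans (P1 R) r A B i) r = (2+2*R \<le> i)"
    by (simp add: P1_simps ptrans_len del: ptrans.simps)
  show ?thesis unfolding prounds_def h by (rule Least_equality) simp_all
qed

lemma srch_len:
  assumes "\<And>b p. length (h b p) = b"
  shows "length (srch h n q R b off t) \<le> 2^q * Suc b"
proof -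
  have a: "length (amsg h n q R b lo u) \<le> 2^q * Suc b" for lo u
  proof -
    have "length (amsg h n q R b lo u) = sum_list (map (\<lambda>i. Suc b) [1..<2^q])"
      unfolding amsg_def length_concat map_map o_def using len_tb[OF assms] by simp
    also have "\<dots> \<le> length [1..<2^q] * Suc b" by (rule sum_list_le) simp
    also have "\<dots> \<le> 2^q * Suc b" by (rule mult_le_mono1) simp
    finally show ?thesis .
  qed
  have b: "length (bmsg h n q R b lo u m) \<le> 2^q * Suc b" for lo u m
  proof -
    have "length (bmsg h n q R b lo u m) \<le> length [1..<2^q]"
      unfolding bmsg_def by (simp add: length_takeWhile_le order_trans[OF length_takeWhile_le])
    also have "\<dots> \<le> 2^q * Suc b" by simp
    finally show ?thesis .
  qed
  show ?thesis unfolding srch_def Let_def using a b by simp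
qed

lemma P1_bits:
  fixes A B :: "'a::countable list"
  shows "pbits (P1 R) r A B \<le> (2 + 2*R) * (2^(q1 R (length A)) * (R * q1 R (length A) + 4))"
proof -
  let ?q = "q1 R (length A)"
  let ?M = "2^?q * (R * ?q + 4)"
  have "length (ptrans (P1 R) r A B (2+2*R) ! n) \<le> ?M" if n: "n < 2 + 2*R" for n
  proof -
    have e: "ptrans (P1 R) r A B (2+2*R) ! n = pmsg (P1 R) (ptrans (P1 R) r A B n) r (if even n then A else B)"
      using n by (rule ptrans_nth)
    have "length (pmsg (P1 R) (ptrans (P1 R) r A B n) r (if even n then A else B)) \<le> ?M"
    proof (cases "n < 2")
      case True
      then consider "n = 0" | "n = 1" by linarith
      then show ?thesis
      proof cases
        case 1
        have "?q < 2^?q" by (rule less_exp)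
        also have "\<dots> \<le> ?M" by simp
        finally show ?thesis using 1 by (simp add: P1_simps)
      next
        case 2
        have l1: "length (ptrans (P1 R) r A B n) = 1" using 2 ptrans_len by simp
        then have "ptrans (P1 R) r A B n \<noteq> []" by auto
        then show ?thesis using l1 by (simp add: P1_simps del: ptrans.simps)
      qed
    next
      case False
      let ?t = "ptrans (P1 R) r A B n"
      have t0: "?t ! 0 = replicate ?q True"
        using ptrans_nth[of 0 n "P1 R" r A B] False by (simp add: P1_simps)
      have tl: "length ?t = n" by (rule ptrans_len)
      have "pmsg (P1 R) ?t r (if even n then A else B)
          = srch (hx r (if even n then A else B)) (length (if even n then A else B)) ?q R (R * ?q + 3) 2 ?t"
        using False tl t0 by (auto simp: P1_simps simp del: ptrans.simps)
      also have "length \<dots> \<le> 2^?q * Suc (R * ?q + 3)" by (rule srch_len) (rule len_hx)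
      also have "Suc (R * ?q + 3) = R * ?q + 4" by simp
      finally show ?thesis .
    qed
    then show ?thesis unfolding e .
  qed
  then have "\<forall>x\<in>set (ptrans (P1 R) r A B (2+2*R)). length x \<le> ?M"
    by (metis in_set_conv_nth ptrans_len)
  then have "sum_list (map length (ptrans (P1 R) r A B (2+2*R))) \<le> (2+2*R) * ?M"
    using sum_list_le[of "ptrans (P1 R) r A B (2+2*R)" length ?M] by (simp only: ptrans_len)
  then show ?thesis unfolding pbits_def ptranscript_def P1_rounds .
qed

definition Tf1 :: "nat \<Rightarrow> nat \<Rightarrow> (nat \<Rightarrow> nat \<Rightarrow> bool list) \<Rightarrow> nat \<Rightarrow> nat \<Rightarrow> nat \<Rightarrow> bool list" where
  "Tf1 R q h n l m = (if m = 0 then replicate q True else if m = 1 then []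
      else STf h n q R (R*q+3) l 2 m)"

lemma P1_correct:
  fixes A B :: "'a::countable list"
  assumes R: "R \<ge> 1"
    and good: "\<forall>p < dd (q1 R (length A)) R 0. chk (hx r B) (length B) (R * q1 R (length A) + 3) p
        (tb (hx r A) (length A) (R * q1 R (length A) + 3) p) = (p \<le> lcp A B)"
  shows "poutput (P1 R) r A B = lcp A B"
proof -
  let ?q = "q1 R (length A)" let ?b = "R * q1 R (length A) + 3" let ?l = "lcp A B"
  let ?T = "Tf1 R ?q (hx r A) (length A) ?l"
  have l: "?l < dd ?q R 0"
    using lcp_props(1)[of A B] q1_ex[OF R, of "length A"] by (simp add: dd_def mult.commute)
  have step: "pmsg (P1 R) (map ?T [0..<n]) r (if even n then A else B) = ?T n" if n: "n < 2 + 2*R" for n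
  proof (cases "n < 2")
    case True
    then consider "n = 0" | "n = 1" by linarith
    then show ?thesis by cases (simp_all add: P1_simps Tf1_def)
  next
    case False
    let ?t = "map ?T [0..<n]"
    have t0: "length (?t ! 0) = ?q" using False by (simp add: Tf1_def nth_map_upt)
    have "srch (if even n then hx r A else hx r B) (if even n then length A else length B) ?q R ?b 2 ?t
        = STf (hx r A) (length A) ?q R ?b ?l 2 n"
    proof (rule srch_ideal[OF len_hx good l])
      show "length ?t = n" by simp
      show "2 \<le> n" using False by simp
      have "n - 2 < R * 2" using n R by linarith
      then show "(n - 2) div 2 < R" by (simp add: div_less_iff_less_mult)
      show "even (2::nat)" by simp
      fix m assume "2 \<le> m" "m < n"
      then show "?t ! m = STf (hx r A) (length A) ?q R ?b ?l 2 m" by (simp add: Tf1_def)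
    qed
    then show ?thesis using False t0 by (cases "even n") (simp_all add: P1_simps Tf1_def)
  qed
  have pt: "ptrans (P1 R) r A B (2+2*R) = map ?T [0..<2+2*R]"
    using ptrans_ideal[OF step, of "2+2*R"] by (simp del: ptrans.simps upt_Suc)
  have z: "length (map ?T [0..<2+2*R] ! 0) = ?q" by (simp add: Tf1_def nth_map_upt del: upt_Suc)
  have mm: "map (\<lambda>v. length (map ?T [0..<2+2*R] ! (2+2 * v+1))) [0..<R] = map (\<lambda>v. sjj ?q R ?l v) [0..<R]"
  proof (rule map_cong[OF refl])
    fix v assume "v \<in> set [0..<R]"
    then have "2+2 * v+1 < 2+2*R" by simp
    then have "map ?T [0..<2+2*R] ! (2+2 * v+1) = ?T (2+2 * v+1)" by (simp del: upt_Suc)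
    then show "length (map ?T [0..<2+2*R] ! (2+2 * v+1)) = sjj ?q R ?l v" by (simp add: Tf1_def STf_def)
  qed
  have "poutput (P1 R) r A B = loof ?q R (map (\<lambda>v. sjj ?q R ?l v) [0..<R])"
    unfolding poutput_def ptranscript_def P1_rounds pt P1_simps z mm ..
  also have "\<dots> = slo ?q R ?l R" using lo_sum[OF l, of R] by (simp add: loof_map)
  also have "\<dots> = ?l" by (simp add: slo_def dd_R)
  finally show ?thesis .
qed

lemma part1:
  fixes \<epsilon> :: real
  assumes "\<epsilon> > 0"
  shows "\<exists>(P :: ('a::countable) protocol) (C::real).
       \<forall>A B. (\<forall>r. phalts_within P r A B C
                 \<and> real (pbits P r A B) \<le> C * (1 + real (length A)) powr \<epsilon>)
           \<and> {r \<in> space coins. poutput P r A B = lcp A B} \<in> sets coins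
           \<and> measure coins {r \<in> space coins. poutput P r A B = lcp A B} \<ge> 2/3"
proof -
  define R where "R = nat \<lceil>6/\<epsilon>\<rceil> + 1"
  have R1: "R \<ge> 1" unfolding R_def by simp
  have "6/\<epsilon> \<le> real R" unfolding R_def by linarith
  then have Re: "6 / real R \<le> \<epsilon>" using assms R1
    by (metis (no_types, lifting) divide_le_eq mult.commute of_nat_0_less_iff order_less_le_trans
        zero_less_one less_le_trans le_less_trans linorder_not_le pos_divide_le_eq R1 assms)
  define C :: real where "C = 8 * ((2+2*R) * (R+4)) + 2 + 2*R"
  show ?thesis
  proof (intro exI[of _ "P1 R"] exI[of _ C] allI)
    fix A B :: "'a list"
    let ?q = "q1 R (length A)" let ?k = "2^?q :: nat"
    have H1: "\<forall>r. phalts_within (P1 R) r A B C \<and> real (pbits (P1 R) r A B) \<le> C * (1 + real (length A)) powr \<epsilon>"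
    proof
      fix r
      have "phalt (P1 R) (ptrans (P1 R) r A B (2+2*R)) r" by (simp add: P1_simps ptrans_len del: ptrans.simps)
      moreover have "real (2+2*R) \<le> C" unfolding C_def by simp
      ultimately have h: "phalts_within (P1 R) r A B C" unfolding phalts_within_def by blast
      have k1: "1 \<le> ?k" by simp
      have qk: "?q \<le> ?k" using less_exp[of ?q] by simp
      have "pbits (P1 R) r A B \<le> (2 + 2*R) * (?k * (R * ?q + 4))" by (rule P1_bits)
      also have "\<dots> \<le> (2 + 2*R) * (?k * ((R+4) * ?k))"
      proof -
        have "R * ?q + 4 \<le> R * ?k + 4 * ?k" using qk k1 by (intro add_mono) simp_all
        then have "R * ?q + 4 \<le> (R+4) * ?k" by (simp add: algebra_simps)
        then show ?thesis by (intro mult_le_mono2)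
      qed
      also have "\<dots> = ((2 + 2*R) * (R+4)) * (?k * ?k)" by (simp add: algebra_simps)
      also have "\<dots> \<le> ((2 + 2*R) * (R+4)) * ?k^3"
        using k1 by (intro mult_left_mono) (simp_all add: power3_eq_cube)
      finally have b1: "real (pbits (P1 R) r A B) \<le> real ((2 + 2*R) * (R+4)) * real ?k ^ 3"
        by (metis of_nat_le_iff of_nat_mult of_nat_power)
      obtain x where x: "?k \<le> 2*x" "x^R \<le> (1 + length A)^1" using q1_x by blast
      have "real ?k ^ 3 \<le> 8 * real (1 + length A) powr \<epsilon>"
        by (rule kbound[OF x R1]) (use Re R1 in \<open>simp_all add: divide_simps\<close>)
      then have "real (pbits (P1 R) r A B) \<le> real ((2 + 2*R) * (R+4)) * (8 * (1 + real (length A)) powr \<epsilon>)"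
        using b1 by (smt (verit, ccfv_SIG) mult_left_mono of_nat_0_le_iff of_nat_Suc plus_1_eq_Suc)
      also have "\<dots> = real (8 * ((2 + 2*R) * (R+4))) * (1 + real (length A)) powr \<epsilon>"
        by simp
      also have "\<dots> \<le> C * (1 + real (length A)) powr \<epsilon>"
        unfolding C_def by (intro mult_right_mono) simp_all
      finally show "phalts_within (P1 R) r A B C \<and> real (pbits (P1 R) r A B) \<le> C * (1 + real (length A)) powr \<epsilon>"
        using h by simp
    qed
    have meas: "(\<lambda>r. poutput (P1 R) r A B) \<in> measurable coins (count_space UNIV)"
      by (rule prot_meas(4)) (rule P1_fin)+
    have Es: "{r \<in> space coins. poutput (P1 R) r A B = lcp A B} \<in> sets coins"
      using measurable_sets[OF meas, of "{lcp A B}"] by (simp add: vimage_def Int_def conj_commute)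
    let ?b = "R * ?q + 3"
    obtain U where U: "U \<in> sets coins" "measure coins U \<le> card {..<dd ?q R 0} * (1/2)^?b"
      "\<And>r. r \<notin> U \<Longrightarrow> \<forall>p\<in>{..<dd ?q R 0}. chk (hx r B) (length B) ?b p (tb (hx r A) (length A) ?b p) = (p \<le> lcp A B)"
      using badU[where P="{..<dd ?q R 0}" and b="?b" and A=A and B=B] by auto
    have "card {..<dd ?q R 0} * (1/2::real)^?b = (2::real)^(R*?q) * (1/2)^(R*?q+3)"
      by (simp add: dd_def mult.commute)
    also have "\<dots> = ((2::real) * (1/2))^(R*?q) * (1/2)^3"
      by (simp only: power_add power_mult_distrib mult.assoc)
    also have "\<dots> = 1/8" by (simp add: power3_eq_cube)
    finally have "card {..<dd ?q R 0} * (1/2::real)^?b = 1/8" .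
    then have mU: "measure coins U \<le> 1/8" using U(2) by simp
    have sub: "space coins - U \<subseteq> {r \<in> space coins. poutput (P1 R) r A B = lcp A B}"
    proof
      fix r assume "r \<in> space coins - U"
      then have "\<forall>p<dd ?q R 0. chk (hx r B) (length B) ?b p (tb (hx r A) (length A) ?b p) = (p \<le> lcp A B)"
        using U(3) by auto
      then have "poutput (P1 R) r A B = lcp A B" by (rule P1_correct[OF R1])
      then show "r \<in> {r \<in> space coins. poutput (P1 R) r A B = lcp A B}" using \<open>r \<in> space coins - U\<close> by simp
    qed
    have "measure coins (space coins - U) = 1 - measure coins U" using U(1) by (rule C.prob_compl)
    also have "\<dots> \<ge> 7/8" using mU by simp
    finally have "7/8 \<le> measure coins (space coins - U)" .
    also have "\<dots> \<le> measure coins {r \<in> space coins. poutput (P1 R) r A B = lcp A B}"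
      using sub Es by (intro C.finite_measure_mono)
    finally have "2/3 \<le> measure coins {r \<in> space coins. poutput (P1 R) r A B = lcp A B}" by simp
    then show "(\<forall>r. phalts_within (P1 R) r A B C \<and> real (pbits (P1 R) r A B) \<le> C * (1 + real (length A)) powr \<epsilon>)
           \<and> {r \<in> space coins. poutput (P1 R) r A B = lcp A B} \<in> sets coins
           \<and> measure coins {r \<in> space coins. poutput (P1 R) r A B = lcp A B} \<ge> 2/3"
      using H1 Es by simp
  qed
qed

definition LL :: "nat \<Rightarrow> nat" where "LL j = 2^(2^j)"
definition p1e :: "bool list list \<Rightarrow> nat" where "p1e t = (LEAST i. length t \<le> 2*i+1 \<or> t!(2*i+1) = [])"
definition q2 :: "nat \<Rightarrow> nat \<Rightarrow> nat" where "q2 R j = 2^j div R + 1"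

definition P2 :: "nat \<Rightarrow> 'a::countable protocol" where
 "P2 R = \<lparr>pmsg = (\<lambda>t r X. if 2 * p1e t + 1 < length t
       then srch (hx r X) (length X) (q2 R (p1e t)) R (R * q2 R (p1e t) + 3) (2 * p1e t + 2) t
       else if even (length t) then tb (hx r X) (length X) 3 (LL (length t div 2))
       else if chk (hx r X) (length X) 3 (LL (length t div 2)) (last t) then [True] else []),
   phalt = (\<lambda>t r. 2 * p1e t + 1 < length t \<and> 2 * p1e t + 2 + 2*R \<le> length t),
   pout = (\<lambda>t r. loof (q2 R (p1e t)) R (map (\<lambda>v. length (t!(2 * p1e t + 2 + 2 * v + 1))) [0..<R]))\<rparr>"

lemma P2_simps:
  "pmsg (P2 R) t r X = (if 2 * p1e t + 1 < length t
       then srch (hx r X) (length X) (q2 R (p1e t)) R (R * q2 R (p1e t) + 3) (2 * p1e t + 2) t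
       else if even (length t) then tb (hx r X) (length X) 3 (LL (length t div 2))
       else if chk (hx r X) (length X) 3 (LL (length t div 2)) (last t) then [True] else [])"
  "phalt (P2 R) t r = (2 * p1e t + 1 < length t \<and> 2 * p1e t + 2 + 2*R \<le> length t)"
  "pout (P2 R) t r = loof (q2 R (p1e t)) R (map (\<lambda>v. length (t!(2 * p1e t + 2 + 2 * v + 1))) [0..<R])"
  by (simp_all add: P2_def)

lemma P2_fin:
  "fin_dep (\<lambda>r. pmsg (P2 R) t r X)" "fin_dep (\<lambda>r. phalt (P2 R) t r)" "fin_dep (\<lambda>r. pout (P2 R) t r)"
proof -
  let ?b = "R * q2 R (p1e t) + 3"
  let ?F = "\<lambda>h. if 2 * p1e t + 1 < length t
       then srch h (length X) (q2 R (p1e t)) R ?b (2 * p1e t + 2) t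
       else if even (length t) then tb h (length X) 3 (LL (length t div 2))
       else if chk h (length X) 3 (LL (length t div 2)) (last t) then [True] else []"
  have "fin_dep (\<lambda>r. ?F (hx r X))"
  proof (rule fin_dep_hx[where ba = 3 and bb = ?b])
    fix h h' :: "nat \<Rightarrow> nat \<Rightarrow> bool list" assume h3: "h 3 = h' 3" and hb: "h ?b = h' ?b"
    have e3: "\<And>p. h 3 p = h' 3 p" using h3 by simp
    show "?F h = ?F h'"
      using srch_cong[of h ?b h' "length X" "q2 R (p1e t)" R "2 * p1e t + 2" t, OF hb]
      unfolding tb_def chk_def by (simp only: e3)
  qed
  then show "fin_dep (\<lambda>r. pmsg (P2 R) t r X)" by (simp add: P2_simps)
  show "fin_dep (\<lambda>r. phalt (P2 R) t r)" "fin_dep (\<lambda>r. pout (P2 R) t r)"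
    by (simp_all add: P2_simps fin_dep_const)
qed

definition Tf2 :: "nat \<Rightarrow> nat \<Rightarrow> (nat \<Rightarrow> nat \<Rightarrow> bool list) \<Rightarrow> nat \<Rightarrow> nat \<Rightarrow> nat \<Rightarrow> nat \<Rightarrow> bool list" where
  "Tf2 R q h n l js m = (if m < 2*js+2 then (if even m then tb h n 3 (LL (m div 2))
      else if m div 2 < js then [True] else [])
      else STf h n q R (R*q+3) l (2*js+2) m)"

lemma p1e_ph1:
  assumes "m \<le> 2*js+1"
  shows "p1e (map (Tf2 R q h n l js) [0..<m]) = m div 2"
  unfolding p1e_def
proof (rule Least_equality)
  show "length (map (Tf2 R q h n l js) [0..<m]) \<le> 2 * (m div 2) + 1
      \<or> map (Tf2 R q h n l js) [0..<m] ! (2 * (m div 2) + 1) = []"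
  proof (rule disjI1)
    have "m \<le> 2 * (m div 2) + 1" by presburger
    then show "length (map (Tf2 R q h n l js) [0..<m]) \<le> 2 * (m div 2) + 1" by simp
  qed
next
  fix y assume y: "length (map (Tf2 R q h n l js) [0..<m]) \<le> 2 * y + 1
      \<or> map (Tf2 R q h n l js) [0..<m] ! (2 * y + 1) = []"
  show "m div 2 \<le> y"
  proof (rule ccontr)
    assume "\<not> m div 2 \<le> y"
    then have yl: "2*y+1 < m" "y < js" using assms by linarith+
    then have "map (Tf2 R q h n l js) [0..<m] ! (2 * y + 1) = [True]"
      using assms by (simp add: Tf2_def del: upt_Suc)
    then show False using y yl by simp
  qed
qed

lemma p1e_ph2:
  assumes "2*js+2 \<le> m"
  shows "p1e (map (Tf2 R q h n l js) [0..<m]) = js"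
  unfolding p1e_def
proof (rule Least_equality)
  have "2*js+1 < m" using assms by simp
  then show "length (map (Tf2 R q h n l js) [0..<m]) \<le> 2 * js + 1
      \<or> map (Tf2 R q h n l js) [0..<m] ! (2 * js + 1) = []" by (simp add: Tf2_def del: upt_Suc)
next
  fix y assume y: "length (map (Tf2 R q h n l js) [0..<m]) \<le> 2 * y + 1
      \<or> map (Tf2 R q h n l js) [0..<m] ! (2 * y + 1) = []"
  show "js \<le> y"
  proof (rule ccontr)
    assume "\<not> js \<le> y"
    then have yl: "2*y+1 < m" "y < js" using assms by linarith+
    then have "map (Tf2 R q h n l js) [0..<m] ! (2 * y + 1) = [True]"
      by (simp add: Tf2_def del: upt_Suc)
    then show False using y yl by simp
  qed
qed

lemma div_bound: "R \<ge> 1 \<Longrightarrow> (x::nat) < R * (x div R + 1)"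
proof -
  assume "R \<ge> 1"
  then have m: "x mod R < R" by simp
  have e: "x div R * R + x mod R = x" by (rule div_mult_mod_eq)
  have "R * (x div R + 1) = x div R * R + R" by (simp add: algebra_simps)
  then show ?thesis using e m by linarith
qed

lemma js_ex: "\<exists>j. l < LL j"
proof -
  have "l < 2^l" by (rule less_exp)
  also have "\<dots> \<le> 2^(2^l)" using less_exp[of l] by (intro power_increasing) simp_all
  finally show ?thesis unfolding LL_def by blast
qed

lemma P2_correct:
  fixes A B :: "'a::countable list"
  assumes R: "R \<ge> 1"
    and js: "js = (LEAST j. lcp A B < LL j)"
    and G1: "chk (hx r B) (length B) 3 (LL js) (tb (hx r A) (length A) 3 (LL js)) = (LL js \<le> lcp A B)"
    and G2: "\<forall>p < dd (q2 R js) R 0. chk (hx r B) (length B) (R * q2 R js + 3) p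
        (tb (hx r A) (length A) (R * q2 R js + 3) p) = (p \<le> lcp A B)"
  shows "ptrans (P2 R) r A B (2*js+2+2*R) = map (Tf2 R (q2 R js) (hx r A) (length A) (lcp A B) js) [0..<2*js+2+2*R]"
    and "prounds (P2 R) r A B = 2*js+2+2*R"
    and "poutput (P2 R) r A B = lcp A B"
proof -
  let ?q = "q2 R js" let ?b = "R * q2 R js + 3" let ?l = "lcp A B"
  let ?T = "Tf2 R ?q (hx r A) (length A) ?l js"
  let ?N = "2*js+2+2*R"
  have lLL: "?l < LL js" using js js_ex LeastI_ex by metis
  have LLle: "i < js \<Longrightarrow> LL i \<le> ?l" for i using js not_less_Least by (metis not_le)
  have l: "?l < dd ?q R 0"
  proof -
    have "2^js < R * ?q" unfolding q2_def by (rule div_bound[OF R])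
    then have "LL js \<le> 2^(R * ?q)" unfolding LL_def by (intro power_increasing) simp_all
    then show ?thesis using lLL by (simp add: dd_def mult.commute)
  qed
  have step: "pmsg (P2 R) (map ?T [0..<m]) r (if even m then A else B) = ?T m" if m: "m < ?N" for m
  proof (cases "m < 2*js+2")
    case True
    then have pe: "p1e (map ?T [0..<m]) = m div 2" by (intro p1e_ph1) simp
    have nc: "\<not> 2 * (m div 2) + 1 < m" by simp
    show ?thesis
    proof (cases "even m")
      case True
      then show ?thesis using pe nc \<open>m < 2*js+2\<close> by (simp add: P2_simps Tf2_def)
    next
      case False
      then have m0: "m > 0" by (cases m) auto
      have lt: "last (map ?T [0..<m]) = ?T (m - 1)" using m0 by (simp add: last_map)
      have "m - 1 < 2*js+2" "even (m - 1)" "(m - 1) div 2 = m div 2" using False True m0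
        by (simp_all, presburger+)
      then have lt2: "last (map ?T [0..<m]) = tb (hx r A) (length A) 3 (LL (m div 2))"
        using lt by (simp add: Tf2_def)
      have "chk (hx r B) (length B) 3 (LL (m div 2)) (tb (hx r A) (length A) 3 (LL (m div 2)))
          = (m div 2 < js)"
      proof (cases "m div 2 < js")
        case True
        then have "LL (m div 2) \<le> ?l" by (rule LLle)
        then have "LL (m div 2) \<le> length A \<and> LL (m div 2) \<le> length B \<and> take (LL (m div 2)) A = take (LL (m div 2)) B"
          using lcp_iff by blast
        then show ?thesis using True by (simp add: chk_tb hx_def)
      next
        case False
        then have "m div 2 = js" using \<open>m < 2*js+2\<close> by linarith
        then show ?thesis using G1 lLL by simp
      qed
      then show ?thesis using pe nc False \<open>m < 2*js+2\<close> lt2 by (simp add: P2_simps Tf2_def)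
    qed
  next
    case False
    then have pe: "p1e (map ?T [0..<m]) = js" by (intro p1e_ph2) simp
    have sf: "srch (if even m then hx r A else hx r B) (if even m then length A else length B) ?q R ?b (2*js+2) (map ?T [0..<m])
        = STf (hx r A) (length A) ?q R ?b ?l (2*js+2) m"
    proof (rule srch_ideal[OF len_hx G2 l])
      show "length (map ?T [0..<m]) = m" by simp
      show "2*js+2 \<le> m" using False by simp
      have "m - (2*js+2) < R * 2" using m R by linarith
      then show "(m - (2*js+2)) div 2 < R" by (simp add: div_less_iff_less_mult)
      show "even (2*js+2)" by simp
      fix m' assume "2*js+2 \<le> m'" "m' < m"
      then show "map ?T [0..<m] ! m' = STf (hx r A) (length A) ?q R ?b ?l (2*js+2) m'"
        by (simp add: Tf2_def del: upt_Suc)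
    qed
    moreover have "2 * js + 1 < m" using False by simp
    then have pm: "pmsg (P2 R) (map ?T [0..<m]) r X = srch (hx r X) (length X) ?q R ?b (2*js+2) (map ?T [0..<m])" for X
      using pe by (simp only: P2_simps length_map length_upt diff_zero if_True)
    moreover have Tm: "?T m = STf (hx r A) (length A) ?q R ?b ?l (2*js+2) m"
      using False by (simp only: Tf2_def if_False)
    show ?thesis
    proof (cases "even m")
      case True
      have "pmsg (P2 R) (map ?T [0..<m]) r A = srch (hx r A) (length A) ?q R ?b (2*js+2) (map ?T [0..<m])"
        by (rule pm)
      also have "\<dots> = ?T m" using sf True Tm by simp
      finally show ?thesis using True by simp
    next
      case False
      have "pmsg (P2 R) (map ?T [0..<m]) r B = srch (hx r B) (length B) ?q R ?b (2*js+2) (map ?T [0..<m])"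
        by (rule pm)
      also have "\<dots> = ?T m" using sf False Tm by simp
      finally show ?thesis using False by simp
    qed
  qed
  have pt: "\<And>i. i \<le> ?N \<Longrightarrow> ptrans (P2 R) r A B i = map ?T [0..<i]"
    by (rule ptrans_ideal[OF step])
  show "ptrans (P2 R) r A B ?N = map ?T [0..<?N]" by (rule pt) (rule order_refl)
  have nh: "\<not> phalt (P2 R) (map ?T [0..<i]) r" if "i < ?N" for i
  proof (cases "i \<le> 2*js+1")
    case True
    have "\<not> 2 * (i div 2) + 1 < i" by presburger
    then show ?thesis using p1e_ph1[OF True] by (simp add: P2_simps)
  next
    case False
    then show ?thesis using p1e_ph2[of js i] that by (simp add: P2_simps)
  qed
  have hN: "phalt (P2 R) (map ?T [0..<?N]) r" using p1e_ph2[of js ?N] by (simp add: P2_simps)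
  show pr: "prounds (P2 R) r A B = ?N"
    unfolding prounds_def
  proof (rule Least_equality)
    show "phalt (P2 R) (ptrans (P2 R) r A B ?N) r" unfolding pt[OF order_refl] by (rule hN)
    fix y assume y: "phalt (P2 R) (ptrans (P2 R) r A B y) r"
    show "?N \<le> y"
    proof (rule ccontr)
      assume "\<not> ?N \<le> y"
      then have "y < ?N" by simp
      then show False using y nh[OF \<open>y < ?N\<close>] unfolding pt[OF less_imp_le[OF \<open>y < ?N\<close>]] by blast
    qed
  qed
  have pe: "p1e (map ?T [0..<?N]) = js" by (intro p1e_ph2) simp
  have mm: "map (\<lambda>v. length (map ?T [0..<?N] ! (2*js+2+2 * v+1))) [0..<R] = map (\<lambda>v. sjj ?q R ?l v) [0..<R]"
  proof (rule map_cong[OF refl])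
    fix v assume "v \<in> set [0..<R]"
    then have "2*js+2+2 * v+1 < ?N" by simp
    then have "map ?T [0..<?N] ! (2*js+2+2 * v+1) = ?T (2*js+2+2 * v+1)" by (simp del: upt_Suc)
    then show "length (map ?T [0..<?N] ! (2*js+2+2 * v+1)) = sjj ?q R ?l v" by (simp add: Tf2_def STf_def)
  qed
  have "poutput (P2 R) r A B = loof ?q R (map (\<lambda>v. sjj ?q R ?l v) [0..<R])"
    unfolding poutput_def ptranscript_def pr pt[OF order_refl] P2_simps pe mm ..
  also have "\<dots> = slo ?q R ?l R" using lo_sum[OF l, of R] by (simp add: loof_map)
  also have "\<dots> = ?l" by (simp add: slo_def dd_R)
  finally show "poutput (P2 R) r A B = lcp A B" .
qed

lemma sjj_lt: "sjj q R l u < 2^q"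
proof (cases "u < R")
  case True
  have D: "dd q R u = 2^q * dd q R (Suc u)" using True by (rule dd_Suc)
  have "l mod dd q R u < 2^q * dd q R (Suc u)" using D dd_pos[of q R u] by simp
  then show ?thesis unfolding sjj_def using dd_pos[of q R "Suc u"]
    by (simp add: div_less_iff_less_mult)
next
  case False
  then have "dd q R u = 1" by (simp add: dd_def)
  then show ?thesis by (simp add: sjj_def)
qed

lemma amsg_len:
  assumes "\<And>b p. length (h b p) = b"
  shows "length (amsg h n q R b lo u) \<le> 2^q * Suc b"
proof -
  have "length (amsg h n q R b lo u) = sum_list (map (\<lambda>i. Suc b) [1..<2^q])"
    unfolding amsg_def length_concat map_map o_def using len_tb[OF assms] by simp
  also have "\<dots> \<le> length [1..<2^q] * Suc b" by (rule sum_list_le) simp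
  also have "\<dots> \<le> 2^q * Suc b" by (rule mult_le_mono1) simp
  finally show ?thesis .
qed

lemma Tf2_len:
  assumes "1 \<le> q"
  shows "length (Tf2 R q (hx r A) (length A) l js m) \<le> 2^q * (R*q+4)"
proof -
  have k2: "2 \<le> (2::nat)^q" using assms by (metis power_one_right power_increasing zero_less_numeral one_le_numeral)
  show ?thesis
  proof (cases "m < 2*js+2")
    case True
    have "length (Tf2 R q (hx r A) (length A) l js m) \<le> 4"
      using True by (simp add: Tf2_def tb_def len_hx)
    also have "4 \<le> 2^q * (R*q+4)" using k2 by (metis le_add2 mult_le_mono one_le_numeral
        dual_order.trans le_numeral_extra(4) mult.left_neutral add.commute)
    finally show ?thesis .
  next
    case False
    have st: "length (STf (hx r A) (length A) q R (R*q+3) l (2*js+2) m) \<le> 2^q * Suc (R*q+3)"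
    proof (cases "even (m - (2*js+2))")
      case True
      have "length (amsg (hx r A) (length A) q R (R*q+3) lo u) \<le> 2^q * Suc (R*q+3)" for lo u
        by (rule amsg_len) (rule len_hx)
      then show ?thesis using True by (simp add: STf_def Let_def)
    next
      case False
      have "sjj q R l ((m - (2*js+2)) div 2) < 2^q" by (rule sjj_lt)
      moreover have "(2::nat)^q \<le> 2^q * Suc (R*q+3)" by simp
      ultimately have "sjj q R l ((m - (2*js+2)) div 2) \<le> 2^q * Suc (R*q+3)" by linarith
      then show ?thesis using False by (simp add: STf_def Let_def)
    qed
    then show ?thesis using False by (simp add: Tf2_def add.commute)
  qed
qed

lemma part2:
  fixes \<epsilon> :: real
  assumes "\<epsilon> > 0"
  shows "\<exists>(P :: ('a::countable) protocol) (C::real).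
       \<forall>A B. (let E = {r \<in> space coins.
                    phalts_within P r A B (C * log 2 (log 2 (real (lcp A B) + 4)))
                  \<and> real (pbits P r A B) \<le> C * (1 + real (lcp A B)) powr \<epsilon>
                  \<and> poutput P r A B = lcp A B}
              in E \<in> sets coins \<and> measure coins E \<ge> 2/3)"
proof -
  define R where "R = nat \<lceil>6/\<epsilon>\<rceil> + 2"
  have R2: "R \<ge> 2" unfolding R_def by simp
  then have R1: "R \<ge> 1" by simp
  have "6/\<epsilon> \<le> real R" unfolding R_def by linarith
  then have "6 \<le> \<epsilon> * real R" using assms by (simp add: divide_le_eq mult.commute)
  then have Re: "6 / real R \<le> \<epsilon>" using R1 by (simp add: divide_le_eq mult.commute)
  define C :: real where "C = 8 * ((4*R+2) * (R+4)) + 6 + 2*R"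
  show ?thesis
  proof (intro exI[of _ "P2 R"] exI[of _ C] allI)
    fix A B :: "'a list"
    let ?l = "lcp A B"
    define js where "js = (LEAST j. ?l < LL j)"
    let ?q = "q2 R js" let ?b = "R * q2 R js + 3"
    let ?k = "2^?q :: nat"
    let ?N = "2*js+2+2*R"
    let ?T = "Tf2 R ?q (hx r A) (length A) ?l js"
    let ?L = "log 2 (log 2 (real ?l + 4))"
    define E where "E = {r \<in> space coins.
                    phalts_within (P2 R) r A B (C * ?L)
                  \<and> real (pbits (P2 R) r A B) \<le> C * (1 + real ?l) powr \<epsilon>
                  \<and> poutput (P2 R) r A B = ?l}"
    have Es: "E \<in> sets coins"
    proof -
      have m3: "(\<lambda>r. pbits (P2 R) r A B) \<in> measurable coins (count_space UNIV)"
        by (rule prot_meas(3)) (rule P2_fin)+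
      have p2: "Measurable.pred coins (\<lambda>r. real (pbits (P2 R) r A B) \<le> C * (1 + real ?l) powr \<epsilon>)"
        using measurable_compose[OF m3 measurable_count_space[where f="\<lambda>n::nat. real n \<le> C * (1 + real ?l) powr \<epsilon>"]] .
      have p1: "Measurable.pred coins (\<lambda>r. phalts_within (P2 R) r A B (C * ?L))"
        by (rule prot_meas(5)) (rule P2_fin)+
      have p3: "Measurable.pred coins (\<lambda>r. poutput (P2 R) r A B = ?l)"
        by (rule pred_count_space_const1, rule prot_meas(4)) (rule P2_fin)+
      have "Measurable.pred coins (\<lambda>r. phalts_within (P2 R) r A B (C * ?L)
                  \<and> real (pbits (P2 R) r A B) \<le> C * (1 + real ?l) powr \<epsilon>
                  \<and> poutput (P2 R) r A B = ?l)"
        by (rule pred_intros_logic(3)[OF p1 pred_intros_logic(3)[OF p2 p3]])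
      then show ?thesis unfolding E_def by (rule predE)
    qed
    have lLL: "?l < LL js" unfolding js_def by (rule LeastI_ex[OF js_ex])
    have q1: "1 \<le> ?q" by (simp add: q2_def)
    have k1: "1 \<le> ?k" by simp
    have qk: "?q < ?k" by (rule less_exp)
    have jsk: "js < R * ?k"
    proof -
      have "js < 2^js" by (rule less_exp)
      also have "2^js < R * ?q" unfolding q2_def by (rule div_bound[OF R1])
      also have "\<dots> \<le> R * ?k" using qk by simp
      finally show ?thesis .
    qed
    have xk: "?k \<le> 2 * 2^(2^js div R) \<and> (2^(2^js div R))^R \<le> (1 + ?l)^2"
    proof
      show "?k \<le> 2 * 2^(2^js div R)" by (simp add: q2_def)
      show "(2^(2^js div R)::nat)^R \<le> (1 + ?l)^2"
      proof (cases js)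
        case 0
        then show ?thesis using R2 by simp
      next
        case (Suc i)
        have "LL i \<le> ?l" using not_less_Least[of i "\<lambda>j. ?l < LL j"] Suc js_def by simp
        have "(2^(2^js div R)::nat)^R = 2^(2^js div R * R)" by (simp add: power_mult)
        also have "\<dots> \<le> 2^(2^js)" by (intro power_increasing) simp_all
        also have "\<dots> = (LL i)^2" unfolding LL_def Suc by (simp add: power_mult[symmetric] mult.commute)
        also have "\<dots> \<le> ?l^2" using \<open>LL i \<le> ?l\<close> by (rule power_mono) simp
        also have "\<dots> \<le> (1 + ?l)^2" by (rule power_mono) simp_all
        finally show ?thesis .
      qed
    qed
    have k3: "real ?k ^ 3 \<le> 8 * real (1 + ?l) powr \<epsilon>"
      by (rule kbound[OF xk[THEN conjunct1] xk[THEN conjunct2] R1]) (use Re R1 in \<open>simp_all add: divide_simps\<close>)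
    have L1: "1 \<le> ?L"
    proof -
      have "2 \<le> log 2 (real ?l + 4)" by (subst le_log_iff) simp_all
      then show ?thesis by (subst le_log_iff) simp_all
    qed
    have jsL: "real js \<le> 1 + ?L"
    proof (cases js)
      case 0 then show ?thesis using L1 by simp
    next
      case (Suc i)
      have "LL i \<le> ?l" using not_less_Least[of i "\<lambda>j. ?l < LL j"] Suc js_def by simp
      have e1: "(2::real) powr (real (2^i)) = real (LL i)"
        unfolding LL_def by (subst powr_realpow) simp_all
      have "real (LL i) \<le> real ?l" using \<open>LL i \<le> ?l\<close> by (simp only: of_nat_le_iff)
      then have A: "(2::real) powr (real (2^i)) < real ?l + 4" using e1 by linarith
      have iff: "real ((2::nat)^i) < log 2 (real ?l + 4) \<longleftrightarrow> (2::real) powr (real (2^i)) < real ?l + 4"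
        by (rule less_log_iff) simp_all
      have "real ((2::nat)^i) < log 2 (real ?l + 4)" using iff A by blast
      moreover have "(2::real) powr (real i) = real (2^i)" by (subst powr_realpow) simp_all
      ultimately have "(2::real) powr (real i) < log 2 (real ?l + 4)" by simp
      then have "real i < ?L" by (subst less_log_iff) (use L1 in \<open>simp_all\<close>)
      then show ?thesis using Suc by simp
    qed
    obtain U1 where U1: "U1 \<in> sets coins" "measure coins U1 \<le> card {LL js} * (1/2)^3"
      "\<And>r. r \<notin> U1 \<Longrightarrow> \<forall>p\<in>{LL js}. chk (hx r B) (length B) 3 p (tb (hx r A) (length A) 3 p) = (p \<le> ?l)"
      using badU[where P="{LL js}" and b=3 and A=A and B=B] by auto
    obtain U2 where U2: "U2 \<in> sets coins" "measure coins U2 \<le> card {..<dd ?q R 0} * (1/2)^?b"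
      "\<And>r. r \<notin> U2 \<Longrightarrow> \<forall>p\<in>{..<dd ?q R 0}. chk (hx r B) (length B) ?b p (tb (hx r A) (length A) ?b p) = (p \<le> ?l)"
      using badU[where P="{..<dd ?q R 0}" and b="?b" and A=A and B=B] by auto
    have mU1: "measure coins U1 \<le> 1/8" using U1(2) by (simp add: power3_eq_cube)
    have "card {..<dd ?q R 0} * (1/2::real)^?b = (2::real)^(R*?q) * (1/2)^(R*?q+3)"
      by (simp add: dd_def mult.commute)
    also have "\<dots> = ((2::real) * (1/2))^(R*?q) * (1/2)^3"
      by (simp only: power_add power_mult_distrib mult.assoc)
    also have "\<dots> = 1/8" by (simp add: power3_eq_cube)
    finally have mU2: "measure coins U2 \<le> 1/8" using U2(2) by simp
    have sub: "space coins - (U1 \<union> U2) \<subseteq> E"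
    proof
      fix r assume r: "r \<in> space coins - (U1 \<union> U2)"
      have G1: "chk (hx r B) (length B) 3 (LL js) (tb (hx r A) (length A) 3 (LL js)) = (LL js \<le> ?l)"
        using U1(3)[of r] r by auto
      have G2: "\<forall>p < dd ?q R 0. chk (hx r B) (length B) ?b p (tb (hx r A) (length A) ?b p) = (p \<le> ?l)"
        using U2(3)[of r] r by auto
      note co = P2_correct[OF R1 js_def G1 G2]
      let ?T = "Tf2 R ?q (hx r A) (length A) ?l js"
      have "phalt (P2 R) (ptrans (P2 R) r A B ?N) r"
        unfolding co(1) using p1e_ph2[of js ?N] by (simp add: P2_simps)
      moreover have "real ?N \<le> C * ?L"
      proof -
        have "real ?N \<le> 2 * (1 + ?L) + 2 + 2 * real R" using jsL by simp
        also have "\<dots> \<le> (6 + 2 * real R) * ?L"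
        proof -
          have a0: "real R * 1 \<le> real R * ?L" using L1 by (intro mult_left_mono) simp_all
          then have a: "real R \<le> real R * ?L" by simp
          have b: "(6 + 2 * real R) * ?L = 6 * ?L + 2 * (real R * ?L)" by (simp add: algebra_simps)
          show ?thesis unfolding b using a L1 by argo
        qed
        also have "\<dots> \<le> C * ?L" unfolding C_def using L1 by (intro mult_right_mono) simp_all
        finally show ?thesis .
      qed
      ultimately have h: "phalts_within (P2 R) r A B (C * ?L)" unfolding phalts_within_def by blast
      have "pbits (P2 R) r A B = sum_list (map length (map ?T [0..<?N]))"
        unfolding pbits_def ptranscript_def co(2) co(1) ..
      also have "\<dots> \<le> length (map ?T [0..<?N]) * (?k * (R * ?q + 4))"
        by (rule sum_list_le) (use Tf2_len[OF q1] in auto)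
      also have "\<dots> = ?N * (?k * (R * ?q + 4))" by simp
      also have "\<dots> \<le> ((4*R+2) * ?k) * (?k * ((R+4) * ?k))"
      proof (rule mult_le_mono)
        have a: "2*js \<le> 2*R*?k" using jsk by simp
        have b: "2 + 2*R \<le> (2+2*R) * ?k" using mult_le_mono2[OF k1, of "2+2*R"] by simp
        have c: "(4*R+2)*?k = 2*R*?k + (2+2*R)*?k" by (simp add: algebra_simps)
        show "?N \<le> (4*R+2) * ?k" using a b c by linarith
        have "R * ?q + 4 \<le> R * ?k + 4 * ?k" using qk k1 by (intro add_mono) simp_all
        then have "R * ?q + 4 \<le> (R+4) * ?k" by (simp add: algebra_simps)
        then show "?k * (R * ?q + 4) \<le> ?k * ((R+4) * ?k)" by (intro mult_le_mono2)
      qed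
      also have "\<dots> = ((4*R+2) * (R+4)) * ?k^3" by (simp add: algebra_simps power3_eq_cube)
      finally have b1: "real (pbits (P2 R) r A B) \<le> real ((4*R+2) * (R+4)) * real ?k ^ 3"
        by (metis of_nat_le_iff of_nat_mult of_nat_power)
      also have "\<dots> \<le> real ((4*R+2) * (R+4)) * (8 * real (1 + ?l) powr \<epsilon>)"
        using k3 by (intro mult_left_mono) simp_all
      also have "\<dots> = real (8 * ((4*R+2) * (R+4))) * (1 + real ?l) powr \<epsilon>" by simp
      also have "\<dots> \<le> C * (1 + real ?l) powr \<epsilon>"
        unfolding C_def by (intro mult_right_mono) simp_all
      finally have b: "real (pbits (P2 R) r A B) \<le> C * (1 + real ?l) powr \<epsilon>" .
      show "r \<in> E" unfolding E_def using r h b co(3) by simp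
    qed
    have "measure coins (space coins - (U1 \<union> U2)) = 1 - measure coins (U1 \<union> U2)"
      using U1(1) U2(1) by (intro C.prob_compl) auto
    also have "measure coins (U1 \<union> U2) \<le> measure coins U1 + measure coins U2"
      using U1(1) U2(1) by (rule measure_Un_le)
    then have "1 - measure coins (U1 \<union> U2) \<ge> 3/4" using mU1 mU2 by simp
    finally have "3/4 \<le> measure coins (space coins - (U1 \<union> U2))" .
    also have "\<dots> \<le> measure coins E" using sub Es by (intro C.finite_measure_mono)
    finally have "2/3 \<le> measure coins E" by simp
    then show "let E = {r \<in> space coins.
                    phalts_within (P2 R) r A B (C * log 2 (log 2 (real (lcp A B) + 4)))
                  \<and> real (pbits (P2 R) r A B) \<le> C * (1 + real (lcp A B)) powr \<epsilon>
                  \<and> poutput (P2 R) r A B = lcp A B}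
              in E \<in> sets coins \<and> measure coins E \<ge> 2/3"
      using Es unfolding E_def Let_def by simp
  qed
qed

theorem lemma13:
  fixes \<epsilon> :: real
  assumes "\<epsilon> > 0"
  shows
   "(\<exists>(P :: ('a::countable) protocol) (C::real).
       \<forall>A B. (\<forall>r. phalts_within P r A B C
                 \<and> real (pbits P r A B) \<le> C * (1 + real (length A)) powr \<epsilon>)
           \<and> {r \<in> space coins. poutput P r A B = lcp A B} \<in> sets coins
           \<and> measure coins {r \<in> space coins. poutput P r A B = lcp A B} \<ge> 2/3)
    \<and>
    (\<exists>(P :: 'a protocol) (C::real).
       \<forall>A B. (let E = {r \<in> space coins.
                    phalts_within P r A B (C * log 2 (log 2 (real (lcp A B) + 4)))
                  \<and> real (pbits P r A B) \<le> C * (1 + real (lcp A B)) powr \<epsilon>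
                  \<and> poutput P r A B = lcp A B}
              in E \<in> sets coins \<and> measure coins E \<ge> 2/3))"
  using part1[OF assms] part2[OF assms] by blast

end
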